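(* Let $\mathbf z\in\mathbb{R}^{\rho(n_u+n_y)}$ be fixed, $\varphi:\mathbb{R}^{\rho(n_u+n_y)}\times\mathbb{R}^{n_uT}\to\mathbb{R}^{n_\varphi}$ a regression map, $Y\in\mathbb{R}^{n_yT\times N}$, $\Phi\in\mathbb{R}^{n_\varphi\times N}$ training data matrices, $\widehat\Theta\in\mathbb{R}^{n_yT\times n_\varphi}$, and define $\Sigma_\Delta=\frac1N(Y-\widehat\Theta\Phi)(Y-\widehat\Theta\Phi)^\top$ and $\Sigma_\varphi=\frac1N\Phi\Phi^\top$. Let $Q\in\mathbb{R}^{n_yT\times n_yT}$ and $R\in\mathbb{R}^{n_uT\times n_uT}$ be positive definite, $\bar{\mathbf y}\in\mathbb{R}^{n_yT}$, $\bar{\mathbf u}\in\mathbb{R}^{n_uT}$ references, $J(\mathbf u,\hat{\mathbf y})=\|\hat{\mathbf y}-\bar{\mathbf y}\|_Q^2+\|\mathbf u-\bar{\mathbf u}\|_R^2$, and $\lambda_1,\lambda_2\ge0$. Assume $\Sigma_\Delta$ and $\Sigma_\varphi$ are positive definite. Consider the unconstrained problem $$\min_{\mathbf u,\,\Delta\hat{\mathbf y}}\; J(\mathbf u,\hat{\mathbf y})+\frac{\lambda_1}{N}\|\varphi(\mathbf z,\mathbf u)\|^2_{\Sigma_\varphi^{-1}}+\frac{\lambda_2}{N}\|\Delta\hat{\mathbf y}\|^2_{\Sigma_\Delta^{-1}}\quad\text{s.t.}\quad \hat{\mathbf y}=\widehat\Theta\varphi(\mathbf z,\mathbf u)+\Delta\hat{\mathbf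 y}.$$ Then this problem gives the same optimal $\mathbf u$ as $$\min_{\mathbf u}\; \|\bar{\mathbf y}-\widehat\Theta\varphi(\mathbf z,\mathbf u)\|^2_{\widetilde Q}+\|\bar{\mathbf u}-\mathbf u\|_R^2+\frac{\lambda_1}{N}\|\varphi(\mathbf z,\mathbf u)\|^2_{\Sigma_\varphi^{-1}},$$ where $\widetilde Q=Q-Q\big(Q+\frac{\lambda_2}{N}\Sigma_\Delta^{-1}\big)^{-1}Q\preceq Q$.
   Context: For a vector $x$ and symmetric matrix $W$, $\|x\|_W^2=x^\top Wx$. $A\preceq B$ means $B-A$ is positive semidefinite. *)

theory Defs
  imports "HOL-Analysis.Analysis"
begin

definition wsq :: "real^'m^'m \<Rightarrow> real^'m \<Rightarrow> real" where
  "wsq W x = x \<bullet> (W *v x)"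

definition pos_def :: "real^'m^'m \<Rightarrow> bool" where
  "pos_def M \<longleftrightarrow> transpose M = M \<and> (\<forall>x. x \<noteq> 0 \<longrightarrow> 0 < x \<bullet> (M *v x))"

definition pos_semidef :: "real^'m^'m \<Rightarrow> bool" where
  "pos_semidef M \<longleftrightarrow> transpose M = M \<and> (\<forall>x. 0 \<le> x \<bullet> (M *v x))"

definition loewner_le :: "real^'m^'m \<Rightarrow> real^'m^'m \<Rightarrow> bool" where
  "loewner_le A B \<longleftrightarrow> pos_semidef (B - A)"

end

theory Submission
  imports Defs
begin

lemma inv_props:
  fixes A :: "real^'m^'m"
  assumes "invertible A"
  shows "A ** matrix_inv A = mat 1" "matrix_inv A ** A = mat 1"
proof -
  have "\<exists>A'::real^'m^'m. A ** A' = mat 1 \<and> A' ** A = mat 1" using assms invertible_def by blast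
  from someI_ex[OF this] show "A ** matrix_inv A = mat 1" "matrix_inv A ** A = mat 1"
    unfolding matrix_inv_def by auto
qed

lemma inner_sym:
  fixes A :: "real^'m^'m"
  shows "x \<bullet> (A *v y) = (transpose A *v x) \<bullet> y"
  by (metis dot_lmul_matrix transpose_matrix_vector)

lemma pd_invertible:
  fixes A :: "real^'m^'m"
  assumes "pos_def A" shows "invertible A"
proof -
  have "\<forall>x. A *v x = 0 \<longrightarrow> x = 0"
    using assms unfolding pos_def_def by (metis inner_zero_right less_irrefl)
  then show ?thesis using matrix_left_invertible_ker(1) invertible_left_inverse by blast
qed

lemma inv_sym:
  fixes A :: "real^'m^'m"
  assumes "invertible A" "transpose A = A"
  shows "transpose (matrix_inv A) = matrix_inv A"
proof -
  let ?B = "matrix_inv A"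
  have "transpose ?B ** A = mat 1"
    using inv_props(1)[OF assms(1)] assms(2) by (metis matrix_transpose_mul transpose_mat)
  then have "transpose ?B ** (A ** ?B) = ?B" by (metis matrix_mul_assoc matrix_mul_lid)
  then show ?thesis using inv_props(1)[OF assms(1)] by (simp add: matrix_mul_rid)
qed

lemma pd_inv:
  fixes A :: "real^'m^'m"
  assumes "pos_def A" shows "pos_def (matrix_inv A)"
proof -
  have inv: "invertible A" using pd_invertible[OF assms] .
  have sym: "transpose A = A" using assms pos_def_def by blast
  have "0 < x \<bullet> (matrix_inv A *v x)" if "x \<noteq> 0" for x
  proof -
    let ?y = "matrix_inv A *v x"
    have Ay: "A *v ?y = x" using inv_props(1)[OF inv] by (simp add: matrix_vector_mul_assoc)
    have "?y \<noteq> 0" using Ay that by auto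
    then have "0 < ?y \<bullet> (A *v ?y)" using assms pos_def_def by blast
    then show ?thesis using Ay by (simp add: inner_commute)
  qed
  then show ?thesis unfolding pos_def_def using inv_sym[OF inv sym] by blast
qed

lemma transpose_add: "transpose (A + B) = transpose A + transpose (B::real^'m^'m)"
  by (simp add: transpose_def vec_eq_iff)
lemma transpose_diff: "transpose (A - B) = transpose A - transpose (B::real^'m^'m)"
  by (simp add: transpose_def vec_eq_iff)

lemma pd_add_psd:
  fixes A B :: "real^'m^'m"
  assumes "pos_def A" "pos_semidef B" shows "pos_def (A + B)"
  using assms unfolding pos_def_def pos_semidef_def
  by (auto simp: matrix_vector_mult_add_rdistrib inner_add_right transpose_add add_pos_nonneg)

lemma psd_scale:
  fixes A :: "real^'m^'m"
  assumes "pos_def A" "c \<ge> 0" shows "pos_semidef (c *\<^sub>R A)"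
  using assms unfolding pos_def_def pos_semidef_def
  by (auto simp: transpose_scalar simp flip: scaleR_matrix_vector_assoc intro!: mult_nonneg_nonneg)
     (metis inner_zero_left order.refl order_less_imp_le)

lemma quad_id:
  fixes Q P :: "real^'m^'m"
  assumes Qs: "transpose Q = Q" and inv: "invertible (Q + P)" and Ms: "transpose (Q + P) = Q + P"
  shows "wsq Q (e + dy) + wsq P dy = wsq (Q - Q ** matrix_inv (Q + P) ** Q) e
           + wsq (Q + P) (dy + matrix_inv (Q + P) *v (Q *v e))"
proof -
  define M where "M = Q + P"
  define a where "a = Q *v e"
  define w where "w = matrix_inv M *v a"
  have Mw: "M *v w = a" unfolding w_def using inv_props(1)[OF inv[folded M_def]]
    by (simp add: matrix_vector_mul_assoc)
  have sw: "w \<bullet> (M *v dy) = a \<bullet> dy"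
    using inner_sym[of w M dy] Ms[folded M_def] Mw by simp
  have se: "e \<bullet> (Q *v dy) = a \<bullet> dy"
    using inner_sym[of e Q dy] Qs a_def by simp
  have sq: "e \<bullet> (Q *v w) = a \<bullet> w"
    using inner_sym[of e Q w] Qs a_def by simp
  have Md: "dy \<bullet> (M *v dy) = dy \<bullet> (Q *v dy) + dy \<bullet> (P *v dy)"
    unfolding M_def by (simp add: matrix_vector_mult_add_rdistrib inner_add_right)
  have L: "wsq Q (e + dy) + wsq P dy = e \<bullet> a + 2 * (a \<bullet> dy) + dy \<bullet> (M *v dy)"
    unfolding wsq_def using se Md a_def
    by (simp add: matrix_vector_right_distrib inner_add_left inner_add_right inner_commute)
  have R1: "wsq (Q - Q ** matrix_inv M ** Q) e = e \<bullet> a - a \<bullet> w"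
    unfolding wsq_def using sq a_def w_def
    by (simp add: matrix_vector_mult_diff_rdistrib inner_diff_right matrix_vector_mul_assoc[symmetric])
  have R2: "wsq M (dy + w) = dy \<bullet> (M *v dy) + 2 * (a \<bullet> dy) + a \<bullet> w"
    unfolding wsq_def using sw Mw
    by (simp add: matrix_vector_right_distrib inner_add_left inner_add_right inner_commute)
  show ?thesis using L R1 R2 unfolding M_def[symmetric] w_def a_def by simp
qed

lemma wsq_neg:
  fixes A :: "real^'k^'k"
  shows "wsq A (- v) = wsq A v"
proof -
  have "A *v (- v) = - (A *v v)" by (simp add: vec_eq_iff matrix_vector_mult_def sum_negf)
  then show ?thesis unfolding wsq_def by simp
qed

theorem corollary1:
  fixes z :: "real^'z"
    and \<phi> :: "real^'z \<Rightarrow> real^'u \<Rightarrow> real^'p"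
    and Y :: "real^'n^'y"
    and \<Phi> :: "real^'n^'p"
    and \<Theta> :: "real^'p^'y"
    and Q :: "real^'y^'y"
    and R :: "real^'u^'u"
    and ybar :: "real^'y"
    and ubar :: "real^'u"
    and lam1 lam2 :: real
    and \<Sigma>\<Delta> :: "real^'y^'y"
    and \<Sigma>\<phi> :: "real^'p^'p"
  defines "N \<equiv> real CARD('n)"
  defines "\<Sigma>\<Delta> \<equiv> (1 / N) *\<^sub>R ((Y - \<Theta> ** \<Phi>) ** transpose (Y - \<Theta> ** \<Phi>))"
  defines "\<Sigma>\<phi> \<equiv> (1 / N) *\<^sub>R (\<Phi> ** transpose \<Phi>)"
  defines "J \<equiv> (\<lambda>(u::real^'u) (yh::real^'y). wsq Q (yh - ybar) + wsq R (u - ubar))"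
  defines "F \<equiv> (\<lambda>u (dy::real^'y). J u (\<Theta> *v \<phi> z u + dy)
                 + lam1 / N * wsq (matrix_inv \<Sigma>\<phi>) (\<phi> z u)
                 + lam2 / N * wsq (matrix_inv \<Sigma>\<Delta>) dy)"
  defines "Qt \<equiv> Q - Q ** matrix_inv (Q + (lam2 / N) *\<^sub>R matrix_inv \<Sigma>\<Delta>) ** Q"
  defines "G \<equiv> (\<lambda>u. wsq Qt (ybar - \<Theta> *v \<phi> z u) + wsq R (ubar - u)
                 + lam1 / N * wsq (matrix_inv \<Sigma>\<phi>) (\<phi> z u))"
  assumes "pos_def Q" and "pos_def R"
    and "lam1 \<ge> 0" and "lam2 \<ge> 0"
    and "pos_def \<Sigma>\<Delta>" and "pos_def \<Sigma>\<phi>"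
  shows "(\<forall>u. (\<exists>dy. \<forall>u' dy'. F u dy \<le> F u' dy') \<longleftrightarrow> (\<forall>u'. G u \<le> G u'))
         \<and> loewner_le Qt Q"
  (is "?A \<and> ?B")
proof -
  note defs = N_def \<Sigma>\<Delta>_def \<Sigma>\<phi>_def
  have QQ: "pos_def Q" and Qs: "transpose Q = Q" using assms(8) pos_def_def by auto
  have N0: "N > 0" unfolding N_def by simp
  define P where "P = (lam2 / N) *\<^sub>R matrix_inv \<Sigma>\<Delta>"
  define M where "M = Q + P"
  have Ppsd: "pos_semidef P" unfolding P_def
    using psd_scale[OF pd_inv[OF assms(12)]] N0 assms(11) by simp
  have Mpd: "pos_def M" unfolding M_def using pd_add_psd[OF QQ Ppsd] .
  have Minv: "invertible M" using pd_invertible[OF Mpd] .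
  have Ms: "transpose M = M" using Mpd pos_def_def by blast
  have Qt': "Qt = Q - Q ** matrix_inv M ** Q" unfolding Qt_def M_def P_def by simp
  have Mnn: "0 \<le> wsq M v" for v
    using Mpd unfolding pos_def_def wsq_def by (cases "v = 0") (auto intro: less_imp_le)
  define d0 where "d0 = (\<lambda>u. - (matrix_inv M *v (Q *v (\<Theta> *v \<phi> z u - ybar))))"
  have wneg: "wsq A (- v) = wsq A v" for A :: "real^'y^'y" and v
  proof -
    have "A *v (- v) = - (A *v v)" by (simp add: vec_eq_iff matrix_vector_mult_def sum_negf)
    then show ?thesis unfolding wsq_def by simp
  qed
  have key: "F u dy = G u + wsq M (dy - d0 u)" for u dy
  proof -
    let ?e = "\<Theta> *v \<phi> z u - ybar"
    have 1: "\<Theta> *v \<phi> z u + dy - ybar = ?e + dy" by simp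
    have 2: "lam2 / N * wsq (matrix_inv \<Sigma>\<Delta>) dy = wsq P dy"
      unfolding P_def wsq_def by (simp flip: scaleR_matrix_vector_assoc)
    have 3: "ybar - \<Theta> *v \<phi> z u = - ?e" by simp
    have 5: "wsq R (ubar - u) = wsq R (u - ubar)" using wsq_neg[of R "u - ubar"] by simp
    have 4: "dy - d0 u = dy + matrix_inv M *v (Q *v ?e)" unfolding d0_def by simp
    show ?thesis
      unfolding F_def G_def J_def
      using quad_id[OF Qs Minv[unfolded M_def] Ms[unfolded M_def], of ?e dy]
      unfolding 1 2 3 4 5 wneg Qt' M_def by simp
  qed
  have Gle: "G u \<le> F u dy" for u dy using key Mnn by simp
  have Geq: "F u (d0 u) = G u" for u using key by (simp add: wsq_def)
  have A: ?A
  proof (rule allI, rule iffI)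
    fix u assume "\<exists>dy. \<forall>u' dy'. F u dy \<le> F u' dy'"
    then obtain dy where dy: "\<forall>u' dy'. F u dy \<le> F u' dy'" by blast
    show "\<forall>u'. G u \<le> G u'"
    proof
      fix u' show "G u \<le> G u'" using Gle[of u dy] dy Geq[of u'] by (metis order_trans)
    qed
  next
    fix u assume h: "\<forall>u'. G u \<le> G u'"
    show "\<exists>dy. \<forall>u' dy'. F u dy \<le> F u' dy'"
      using h Geq[of u] Gle by (metis order_trans)
  qed
  have B: ?B
  proof -
    have D: "Q - Qt = Q ** matrix_inv M ** Q" unfolding Qt' by simp
    have iM: "pos_def (matrix_inv M)" using pd_inv[OF Mpd] .
    have T: "transpose (Q ** matrix_inv M ** Q) = Q ** matrix_inv M ** Q"
      using iM Qs unfolding pos_def_def by (simp add: matrix_transpose_mul matrix_mul_assoc)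
    have "0 \<le> x \<bullet> ((Q ** matrix_inv M ** Q) *v x)" for x
    proof -
      have "x \<bullet> ((Q ** matrix_inv M ** Q) *v x) = (Q *v x) \<bullet> (matrix_inv M *v (Q *v x))"
        using inner_sym[of x Q] Qs by (simp add: matrix_vector_mul_assoc[symmetric])
      also have "\<dots> \<ge> 0" using iM unfolding pos_def_def
        by (cases "Q *v x = 0") (auto intro: less_imp_le)
      finally show ?thesis .
    qed
    then show ?thesis unfolding loewner_le_def pos_semidef_def D using T by simp
  qed
  show ?thesis using A B by blast
qed

end
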